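(* Let $\Gamma$ be a finite simple graph with $n$ vertices and let $v_1,\dots,v_k$ be distinct vertices of $\Gamma$, each of full degree (i.e. each adjacent to all other vertices of $\Gamma$). Then $n^k$ divides $\det(\mathbf{J}+\mathbf{Q})$.
   Context: $\mathbf{J}$ is the $n\times n$ matrix all of whose entries are $1$. $\mathbf{Q}=\mathbf{\Delta}-\mathbf{A}$ is the Laplacian matrix of $\Gamma$, where $\mathbf{A}$ is the adjacency matrix of $\Gamma$ and $\mathbf{\Delta}$ is the diagonal matrix whose $i$-th diagonal entry is the degree of the $i$-th vertex. *)

theory Defs
  imports "HOL-Analysis.Analysis"
begin

definition simple_graph :: "('n::finite \<Rightarrow> 'n \<Rightarrow> bool) \<Rightarrow> bool" where
  "simple_graph E \<longleftrightarrow> (\<forall>u v. E u v \<longleftrightarrow> E v u) \<and> (\<forall>u. \<not> E u u)"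

definition degree :: "('n::finite \<Rightarrow> 'n \<Rightarrow> bool) \<Rightarrow> 'n \<Rightarrow> nat" where
  "degree E v = card {u. E v u}"

definition adj_matrix :: "('n::finite \<Rightarrow> 'n \<Rightarrow> bool) \<Rightarrow> int ^ 'n ^ 'n" where
  "adj_matrix E = (\<chi> i j. if E i j then 1 else 0)"

definition degree_matrix :: "('n::finite \<Rightarrow> 'n \<Rightarrow> bool) \<Rightarrow> int ^ 'n ^ 'n" where
  "degree_matrix E = (\<chi> i j. if i = j then int (degree E i) else 0)"

definition laplacian :: "('n::finite \<Rightarrow> 'n \<Rightarrow> bool) \<Rightarrow> int ^ 'n ^ 'n" where
  "laplacian E = degree_matrix E - adj_matrix E"

definition all_ones :: "int ^ 'n::finite ^ 'n" where
  "all_ones = (\<chi> i j. 1)"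

end

theory Submission
  imports Defs
begin

lemma entry_dvd:
  fixes E :: "'n::finite \<Rightarrow> 'n \<Rightarrow> bool"
  assumes "simple_graph E" and "\<forall>u. u \<noteq> v \<longrightarrow> E v u"
  shows "int CARD('n) dvd (all_ones + laplacian E) $ v $ j"
proof -
  have irr: "\<not> E v v" using assms(1) by (simp add: simple_graph_def)
  have "{u. E v u} = UNIV - {v}" using assms(2) irr by auto
  then have deg: "degree E v = CARD('n) - 1" by (simp add: degree_def card_Diff_singleton)
  have pos: "CARD('n) \<ge> 1" by (simp add: Suc_leI)
  show ?thesis
  proof (cases "j = v")
    case True
    then have "(all_ones + laplacian E) $ v $ j = int CARD('n)"
      using deg pos irr by (simp add: all_ones_def laplacian_def degree_matrix_def adj_matrix_def of_nat_diff)
    then show ?thesis by simp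
  next
    case False
    then have "(all_ones + laplacian E) $ v $ j = 0"
      using assms(2) by (simp add: all_ones_def laplacian_def degree_matrix_def adj_matrix_def)
    then show ?thesis by simp
  qed
qed

theorem lemma3p6:
  fixes E :: "'n::finite \<Rightarrow> 'n \<Rightarrow> bool" and vs :: "'n list"
  assumes "simple_graph E"
    and "distinct vs"
    and "\<forall>v \<in> set vs. \<forall>u. u \<noteq> v \<longrightarrow> E v u"
  shows "(int CARD('n)) ^ length vs dvd det (all_ones + laplacian E)"
proof -
  let ?A = "all_ones + laplacian E"
  let ?n = "int CARD('n)"
  have len: "length vs = card (set vs)" using assms(2) by (simp add: distinct_card)
  have key: "?n ^ length vs dvd (\<Prod>i\<in>UNIV. ?A $ i $ p i)" for p :: "'n \<Rightarrow> 'n"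
  proof -
    have "(\<Prod>i\<in>UNIV. ?A $ i $ p i) = (\<Prod>i\<in>set vs. ?A $ i $ p i) * (\<Prod>i\<in>UNIV - set vs. ?A $ i $ p i)"
      using prod.subset_diff[of "set vs" UNIV] by (simp add: mult.commute)
    moreover have "?n ^ length vs dvd (\<Prod>i\<in>set vs. ?A $ i $ p i)"
    proof -
      have "(\<Prod>i\<in>set vs. ?n) dvd (\<Prod>i\<in>set vs. ?A $ i $ p i)"
        by (rule prod_dvd_prod) (use entry_dvd assms(1,3) in blast)
      then show ?thesis using len by simp
    qed
    ultimately show ?thesis by simp
  qed
  show ?thesis unfolding det_def
    by (intro dvd_sum dvd_mult key)
qed

end
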